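(* Assume (A1), (A2), (A3) (see context), and suppose $$\lim_{k\to+\infty}\big\|\mathbb P(\xi(\Lambda_{1/2})=0\mid\mathcal T_k)-\mathbb P(\xi(\Lambda_{1/2})=0)\big\|_\infty=0 .$$ Then there is $c>0$ with $\mathbb P(\xi(\Lambda_\ell)=0)\le e^{-c\ell^d}$ for all $\ell\ge1$. In particular $\mathbb P$ satisfies Condition $C(\alpha)$ for every $\alpha>0$.
   Context: $\Lambda_a=[-a,a]^d$. $\mathcal N$ = locally finite subsets of $\mathbb R^d$, identified with counting measures ($\xi(A)=\#(\xi\cap A)$), $\sigma$-algebra generated by $\xi\mapsto\xi(A)$; $\tau_x\xi:=\xi-x$. $\mathrm{DT}(\xi)$: graph on $\xi$ whose edges are pairs of points with Voronoi cells sharing a $(d-1)$-dimensional face. $\mathcal T_a$ is the $\sigma$-algebra on $\mathcal N$ of events determined by $\xi\cap\Lambda_a^c$; $\|\cdot\|_\infty$ is the $L^\infty(\mathbb P)$ norm. Setting: $(\Omega,\mathcal F,\mathcal P)$ with measurable $\mathbb R^d$-action $(\theta_x)$; simple point process $\omega\mapsto\hat\omega$ with law $\mathbb P$; measurable symmetric conductances $c_{x,y}(\omega)\ge0$ vanishing off edges of $\mathrm{DT}(\hat\omega)$. (A1) $\mathcal P$ $\theta$-invariant, $\mathcal P(\hat\omega=\emptyset)=0$; (A2) $m:=\mathbb E[\xi([0,1]^d)]\in(0,\infty)$; (A3) on a $\theta$-invariant measurable full-measure set, $\widehat{\theta_x\omega}=\tau_x\hat\omega$ and $c_{y-x,z-x}(\theta_x\omega)=c_{y,z}(\omega)$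 for all $x$ and edges $\{y,z\}$. Condition $C(\alpha)$: $\exists\kappa>0$ with $\mathbb P(\xi(\Lambda_\ell)=0)\le\kappa\ell^{-\alpha}$ for all $\ell\ge1$. *)

theory Defs
  imports "HOL-Analysis.Analysis" "HOL-Probability.Probability"
begin

text \<open>Points of R^d are vectors of type real^'d, d = CARD('d).\<close>

definition cube :: "real \<Rightarrow> (real^'d) set"
  where "cube a = {x. \<forall>i. \<bar>x $ i\<bar> \<le> a}"

definition unit_cube :: "(real^'d) set"
  where "unit_cube = {x. \<forall>i. 0 \<le> x $ i \<and> x $ i \<le> 1}"

definition locfin :: "(real^'d) set \<Rightarrow> bool"
  where "locfin \<xi> \<longleftrightarrow> (\<forall>K. bounded K \<longrightarrow> finite (\<xi> \<inter> K))"

definition cnt :: "(real^'d) set \<Rightarrow> (real^'d) set \<Rightarrow> enat"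
  where "cnt \<xi> A = (if finite (\<xi> \<inter> A) then enat (card (\<xi> \<inter> A)) else \<infinity>)"

definition Nsp :: "(real^'d) set measure"
  where "Nsp = sigma {\<xi>. locfin \<xi>}
     {{\<xi>. locfin \<xi> \<and> cnt \<xi> A = n} | A n. A \<in> sets borel}"

text \<open>T_a: events determined by xi restricted to the complement of Lambda_a
  (as a measure on Nsp with the sub-sigma-algebra).\<close>
definition Tail :: "real \<Rightarrow> (real^'d) set measure"
  where "Tail a = sigma {\<xi>. locfin \<xi>}
     {{\<xi>. locfin \<xi> \<and> cnt \<xi> A = n} | A n. A \<in> sets borel \<and> A \<subseteq> - cube a}"

definition voronoi :: "(real^'d) set \<Rightarrow> real^'d \<Rightarrow> (real^'d) set"
  where "voronoi \<xi> x = {z. \<forall>y\<in>\<xi>. dist z x \<le> dist z y}"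

definition DT_edge :: "(real^'d) set \<Rightarrow> real^'d \<Rightarrow> real^'d \<Rightarrow> bool"
  where "DT_edge \<xi> x y \<longleftrightarrow> x \<in> \<xi> \<and> y \<in> \<xi> \<and> x \<noteq> y \<and>
     aff_dim (voronoi \<xi> x \<inter> voronoi \<xi> y) = int CARD('d) - 1"

definition Linf_norm :: "'a measure \<Rightarrow> ('a \<Rightarrow> real) \<Rightarrow> ereal"
  where "Linf_norm M f = esssup M (\<lambda>x. ereal \<bar>f x\<bar>)"

end

theory Submission
  imports Defs
begin

definition scube :: "real^'d \<Rightarrow> real \<Rightarrow> (real^'d) set"
  where "scube y r = {z. \<forall>i. \<bar>z $ i - y $ i\<bar> \<le> r}"

definition shiftN :: "real^'d \<Rightarrow> (real^'d) set \<Rightarrow> (real^'d) set"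
  where "shiftN x \<xi> = (\<lambda>z. z - x) ` \<xi>"

lemma cube_scube: "cube r = scube 0 r"
  by (simp add: cube_def scube_def)

lemma unit_cube_scube: "unit_cube = scube (\<chi> i. 1/2) (1/2)"
proof -
  have e: "\<And>t::real. (0 \<le> t \<and> t \<le> 1) \<longleftrightarrow> \<bar>t - 1/2\<bar> \<le> 1/2" by (auto simp: abs_if)
  show ?thesis unfolding unit_cube_def scube_def by (simp only: e vec_lambda_beta)
qed

lemma scube_translate: "(\<lambda>w. w + x) ` scube y r = scube (y + x) r"
proof -
  have "(\<lambda>w. w + x) ` scube y r = (\<lambda>w. w - x) -` scube y r"
    by (force simp: image_iff)
  then show ?thesis by (auto simp: scube_def algebra_simps)
qed

lemma cnt_zero_iff: "cnt \<xi> A = 0 \<longleftrightarrow> \<xi> \<inter> A = {}"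
  by (auto simp: cnt_def zero_enat_def)

lemma space_Nsp: "space Nsp = {\<xi>. locfin \<xi>}"
  unfolding Nsp_def by (rule space_measure_of) auto

lemma space_Tail: "space (Tail a) = {\<xi>. locfin \<xi>}"
  unfolding Tail_def by (rule space_measure_of) auto

lemma gen_Nsp: "A \<in> sets borel \<Longrightarrow> {\<xi>. locfin \<xi> \<and> cnt \<xi> A = n} \<in> sets Nsp"
  unfolding Nsp_def by (subst sets_measure_of) (auto intro!: sigma_sets.Basic)

lemma gen_Tail: "A \<in> sets borel \<Longrightarrow> A \<subseteq> - cube a \<Longrightarrow> {\<xi>. locfin \<xi> \<and> cnt \<xi> A = n} \<in> sets (Tail a)"
  unfolding Tail_def by (subst sets_measure_of) (auto intro!: sigma_sets.Basic)

lemma subalg_Tail: "subalgebra Nsp (Tail a)"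
proof -
  have "id \<in> measurable Nsp (Tail a)"
    unfolding Tail_def
  proof (rule measurable_measure_of)
    fix B assume "B \<in> {{\<xi>. locfin \<xi> \<and> cnt \<xi> A = n} | A n. A \<in> sets borel \<and> A \<subseteq> - cube a}"
    then obtain A n where A: "A \<in> sets borel" and B: "B = {\<xi>. locfin \<xi> \<and> cnt \<xi> A = n}" by auto
    have "id -` B \<inter> space Nsp = B" using B by (auto simp: space_Nsp)
    then show "id -` B \<inter> space Nsp \<in> sets Nsp" using gen_Nsp[OF A] B by simp
  qed (auto simp: space_Nsp)
  have "S \<in> sets Nsp" if S: "S \<in> sets (Tail a)" for S
  proof -
    have "id -` S \<inter> space Nsp \<in> sets Nsp" using measurable_sets[OF \<open>id \<in> _\<close> S] .
    moreover have "id -` S \<inter> space Nsp = S"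
      using sets.sets_into_space[OF S] by (auto simp: space_Nsp space_Tail)
    ultimately show ?thesis by simp
  qed
  then have "sets (Tail a) \<subseteq> sets Nsp" by auto
  then show ?thesis unfolding subalgebra_def by (simp add: space_Nsp space_Tail)
qed

lemma shift_Int: "shiftN x \<xi> \<inter> A = (\<lambda>z. z - x) ` (\<xi> \<inter> (\<lambda>z. z + x) ` A)"
  unfolding shiftN_def by (force simp: image_iff)

lemma cnt_shift: "cnt (shiftN x \<xi>) A = cnt \<xi> ((\<lambda>z. z + x) ` A)"
proof -
  have inj: "inj_on (\<lambda>z::real^'a. z - x) S" for S by (auto simp: inj_on_def)
  show ?thesis unfolding cnt_def shift_Int
    using finite_image_iff[OF inj] card_image[OF inj] by simp
qed

lemma locfin_shift: "locfin \<xi> \<Longrightarrow> locfin (shiftN x \<xi>)"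
  unfolding locfin_def
proof (intro allI impI)
  fix K :: "(real^'a) set" assume "\<forall>K. bounded K \<longrightarrow> finite (\<xi> \<inter> K)" "bounded K"
  moreover have "(\<lambda>z. z + x) ` K = (\<lambda>z. x + z) ` K" by (simp add: add.commute)
  ultimately have "finite (\<xi> \<inter> (\<lambda>z. z + x) ` K)" using bounded_translation[of K x] by auto
  then show "finite (shiftN x \<xi> \<inter> K)" unfolding shift_Int by simp
qed

lemma translate_borel: "A \<in> sets borel \<Longrightarrow> (\<lambda>z::real^'d. z + x) ` A \<in> sets borel"
proof -
  assume A: "A \<in> sets borel"
  have "(\<lambda>z::real^'d. z + x) ` A = (\<lambda>z. z - x) -` A \<inter> space borel"
    by (force simp: image_iff)
  also have "\<dots> \<in> sets borel" using A by measurable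
  finally show ?thesis .
qed

lemma shift_meas: "shiftN (x::real^'d) \<in> measurable Nsp Nsp"
proof -
  show ?thesis
  unfolding Nsp_def[of ] 
  proof (rule measurable_measure_of)
    show "shiftN x \<in> space (sigma {\<xi>. locfin \<xi>} {{\<xi>. locfin \<xi> \<and> cnt \<xi> A = n} | A n. A \<in> sets borel}) \<rightarrow> {\<xi>. locfin \<xi>}"
      using locfin_shift space_Nsp[unfolded Nsp_def] by auto
  next
    fix B :: "(real^'d) set set" assume "B \<in> {{\<xi>. locfin \<xi> \<and> cnt \<xi> A = n} | A n. A \<in> sets borel}"
    then obtain A n where A: "A \<in> sets borel" and B: "B = {\<xi>. locfin \<xi> \<and> cnt \<xi> A = n}" by auto
    have "shiftN x -` B \<inter> space Nsp = {\<xi>. locfin \<xi> \<and> cnt \<xi> ((\<lambda>z. z + x) ` A) = n}"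
      using B by (auto simp: space_Nsp cnt_shift locfin_shift)
    also have "\<dots> \<in> sets Nsp" by (rule gen_Nsp[OF translate_borel[OF A]])
    finally show "shiftN x -` B \<inter> space (sigma {\<xi>. locfin \<xi>} {{\<xi>. locfin \<xi> \<and> cnt \<xi> A = n} | A n. A \<in> sets borel}) \<in> sets (sigma {\<xi>. locfin \<xi>} {{\<xi>. locfin \<xi> \<and> cnt \<xi> A = n} | A n. A \<in> sets borel})"
      unfolding Nsp_def .
  qed auto
qed

lemma theta_meas:
  assumes act_meas: "(\<lambda>(x, \<omega>). \<theta> x \<omega>) \<in> measurable (borel \<Otimes>\<^sub>M P) P"
  shows "\<theta> x \<in> measurable P P"
proof -
  have "(\<lambda>\<omega>. (x, \<omega>)) \<in> P \<rightarrow>\<^sub>M borel \<Otimes>\<^sub>M P" by measurable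
  from measurable_compose[OF this act_meas] show ?thesis by simp
qed

lemma stationary:
  assumes prob: "prob_space P"
    and act_meas: "(\<lambda>(x, \<omega>). \<theta> x \<omega>) \<in> measurable (borel \<Otimes>\<^sub>M P) P"
    and pp_meas: "pp \<in> measurable P Nsp"
    and A1_inv: "\<And>x. distr P P (\<theta> x) = P"
    and W: "W \<in> sets P" "measure P W = 1" "\<And>\<omega>. \<omega> \<in> W \<Longrightarrow> pp (\<theta> x \<omega>) = shiftN x (pp \<omega>)"
    and A: "A \<in> sets Nsp"
  shows "measure (distr P Nsp pp) (shiftN x -` A \<inter> space Nsp) = measure (distr P Nsp pp) A"
proof -
  have th: "\<theta> x \<in> measurable P P" by (rule theta_meas[OF act_meas])
  have sh: "shiftN x -` A \<inter> space Nsp \<in> sets Nsp" using measurable_sets[OF shift_meas A] .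
  have "measure (distr P Nsp pp) A = measure P (pp -` A \<inter> space P)"
    by (rule measure_distr[OF pp_meas A])
  also have "\<dots> = measure (distr P P (\<theta> x)) (pp -` A \<inter> space P)" using A1_inv by simp
  also have "\<dots> = measure P (\<theta> x -` (pp -` A \<inter> space P) \<inter> space P)"
    by (rule measure_distr[OF th measurable_sets[OF pp_meas A]])
  also have "\<dots> = measure P (pp -` (shiftN x -` A \<inter> space Nsp) \<inter> space P)"
  proof (rule measure_eq_AE)
    have "AE \<omega> in P. \<omega> \<in> W" using prob_space.AE_prob_1[OF prob] W(2) by blast
    then show "AE \<omega> in P. (\<omega> \<in> \<theta> x -` (pp -` A \<inter> space P) \<inter> space P) =
        (\<omega> \<in> pp -` (shiftN x -` A \<inter> space Nsp) \<inter> space P)"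
    proof (rule AE_mp, intro AE_I2 impI)
      fix \<omega> assume \<omega>: "\<omega> \<in> space P" "\<omega> \<in> W"
      have "\<theta> x \<omega> \<in> space P" using th \<omega>(1) by (auto simp: measurable_def)
      moreover have "pp \<omega> \<in> space Nsp" using pp_meas \<omega>(1) by (auto simp: measurable_def)
      ultimately show "(\<omega> \<in> \<theta> x -` (pp -` A \<inter> space P) \<inter> space P) =
        (\<omega> \<in> pp -` (shiftN x -` A \<inter> space Nsp) \<inter> space P)"
        using W(3)[OF \<omega>(2)] \<omega>(1) by auto
    qed
    show "\<theta> x -` (pp -` A \<inter> space P) \<inter> space P \<in> sets P"
      by (rule measurable_sets[OF th measurable_sets[OF pp_meas A]])
    show "pp -` (shiftN x -` A \<inter> space Nsp) \<inter> space P \<in> sets P"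
      by (rule measurable_sets[OF pp_meas sh])
  qed
  also have "\<dots> = measure (distr P Nsp pp) (shiftN x -` A \<inter> space Nsp)"
    by (rule measure_distr[OF pp_meas sh, symmetric])
  finally show ?thesis by simp
qed

definition Vset :: "(real^'d) set \<Rightarrow> (real^'d) set set"
  where "Vset S = {\<xi>. locfin \<xi> \<and> (\<forall>y\<in>S. \<xi> \<inter> scube y (1/2) = {})}"

lemma closed_scube: "closed (scube y r)"
  unfolding scube_def
  by (intro closed_Collect_all allI closed_Collect_le continuous_intros)

lemma gen0: "{\<xi>. locfin \<xi> \<and> cnt \<xi> A = 0} = {\<xi>. locfin \<xi> \<and> \<xi> \<inter> A = {}}"
  by (simp add: cnt_zero_iff)

lemma Vset_sets:
  assumes sp: "space M = {\<xi>. locfin \<xi>}"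
    and gen: "\<And>y. y \<in> S \<Longrightarrow> {\<xi>. locfin \<xi> \<and> \<xi> \<inter> scube y (1/2) = {}} \<in> sets M"
    and fin: "finite S"
  shows "Vset S \<in> sets M"
  using fin gen
proof (induction S rule: finite_induct)
  case empty
  then show ?case using sets.top[of M] by (simp add: Vset_def sp)
next
  case (insert y S)
  have "Vset (insert y S) = {\<xi>. locfin \<xi> \<and> \<xi> \<inter> scube y (1/2) = {}} \<inter> Vset S"
    by (auto simp: Vset_def)
  then show ?case using insert by auto
qed

lemma Vset_Nsp: "finite S \<Longrightarrow> Vset S \<in> sets Nsp"
proof (rule Vset_sets[OF space_Nsp])
  fix y
  have "scube y (1/2) \<in> sets borel" by (rule borel_closed[OF closed_scube])
  from gen_Nsp[OF this, of 0] show "{\<xi>. locfin \<xi> \<and> \<xi> \<inter> scube y (1/2) = {}} \<in> sets Nsp" by (simp add: gen0)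
qed

lemma Vset_shift: "shiftN y -` Vset T \<inter> space Nsp = Vset ((\<lambda>z. z + y) ` T)"
proof -
  have "shiftN y \<xi> \<inter> scube t (1/2) = {} \<longleftrightarrow> \<xi> \<inter> scube (t + y) (1/2) = {}" for \<xi> t
    using cnt_shift[of y \<xi> "scube t (1/2)"] by (simp add: cnt_zero_iff[symmetric] scube_translate)
  then show ?thesis by (auto simp: Vset_def space_Nsp locfin_shift)
qed

lemma scube_outside:
  assumes "k \<ge> 0" "\<bar>t $ i\<bar> > k + 1/2"
  shows "scube t (1/2) \<subseteq> - cube k"
proof
  fix x assume "x \<in> scube t (1/2)"
  then have "\<bar>x $ i - t $ i\<bar> \<le> 1/2" by (auto simp: scube_def)
  then have "\<bar>x $ i\<bar> > k" using assms(2) by linarith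
  then show "x \<in> - cube k" by (auto simp: cube_def not_le)
qed

lemma Vset_Tail:
  assumes "finite T" "k \<ge> 0" "\<And>t. t \<in> T \<Longrightarrow> \<exists>i. \<bar>t $ i\<bar> > k + 1/2"
  shows "Vset T \<in> sets (Tail k)"
proof (rule Vset_sets[OF space_Tail _ assms(1)])
  fix y assume "y \<in> T"
  then obtain i where "\<bar>y $ i\<bar> > k + 1/2" using assms(3) by blast
  then have sub: "scube y (1/2) \<subseteq> - cube k" by (rule scube_outside[OF assms(2)])
  have "scube y (1/2) \<in> sets borel" by (rule borel_closed[OF closed_scube])
  from gen_Tail[OF this sub, of 0] show "{\<xi>. locfin \<xi> \<and> \<xi> \<inter> scube y (1/2) = {}} \<in> sets (Tail k)"
    by (simp add: gen0)
qed

lemma prod_bound: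
  fixes PP :: "(real^'d) set measure"
  assumes stat: "\<And>x A. A \<in> sets Nsp \<Longrightarrow> measure PP (shiftN x -` A \<inter> space Nsp) = measure PP A"
    and cond: "\<And>B. B \<in> sets (Tail k) \<Longrightarrow> measure PP (Vset {0} \<inter> B) \<le> q * measure PP B"
    and q: "q \<ge> 0" and k: "k \<ge> 0" and pr: "prob_space PP"
  shows "finite S \<Longrightarrow> (\<forall>y\<in>S. \<forall>y'\<in>S. y \<noteq> y' \<longrightarrow> (\<exists>i. \<bar>y $ i - y' $ i\<bar> > k + 1/2))
     \<Longrightarrow> measure PP (Vset S) \<le> q ^ card S"
proof (induction S rule: finite_induct)
  case empty
  show ?case using prob_space.prob_le_1[OF pr] by simp
next
  case (insert y S)
  define T where "T = (\<lambda>z. z - y) ` S"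
  have finT: "finite T" using insert(1) by (simp add: T_def)
  have ST: "(\<lambda>z. z + y) ` T = S" by (force simp: T_def image_iff)
  have iT: "(\<lambda>z. z + y) ` insert 0 T = insert y S" using ST by simp
  have sepT: "\<exists>i. \<bar>t $ i\<bar> > k + 1/2" if "t \<in> T" for t
  proof -
    obtain y' where y': "y' \<in> S" "t = y' - y" using \<open>t \<in> T\<close> by (auto simp: T_def)
    then have "y' \<noteq> y" using insert(2) by auto
    then obtain i where "\<bar>y' $ i - y $ i\<bar> > k + 1/2" using insert(4) y'(1) by blast
    then show ?thesis using y'(2) by auto
  qed
  have IH: "measure PP (Vset S) \<le> q ^ card S" using insert(3,4) by blast
  have "measure PP (Vset (insert y S)) = measure PP (shiftN y -` Vset (insert 0 T) \<inter> space Nsp)"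
    using Vset_shift[of y "insert 0 T"] iT by simp
  also have "\<dots> = measure PP (Vset (insert 0 T))"
    using stat Vset_Nsp finT by blast
  also have "Vset (insert 0 T) = Vset {0} \<inter> Vset T" by (auto simp: Vset_def)
  also have "measure PP (Vset {0} \<inter> Vset T) \<le> q * measure PP (Vset T)"
    by (rule cond[OF Vset_Tail[OF finT k sepT]])
  also have "measure PP (Vset T) = measure PP (shiftN y -` Vset T \<inter> space Nsp)"
    using stat Vset_Nsp finT by metis
  also have "\<dots> = measure PP (Vset S)" using Vset_shift[of y T] ST by simp
  also have "q * measure PP (Vset S) \<le> q * q ^ card S" using IH q by (rule mult_left_mono)
  finally show ?case using insert(1,2) by simp
qed

lemma grid_count: fixes l s :: real and m :: nat assumes l: "l \<ge> 1" and s: "s \<ge> 1" and mge: "real m \<ge> (l - 1/2) / s - 1"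
shows "l / (s + 1) \<le> real (2 * m + 1)"
  proof (cases "l \<le> s + 1")
    case True
    then have "l / (s + 1) \<le> 1" using s by (simp add: field_simps)
    then show ?thesis by simp
  next
    case False
    then have l': "l > s + 1" by simp
    have h: "(s + 1) * (s + 2) \<le> l * (s + 2)" using l' s by (intro mult_right_mono) auto
    have e: "(2 * l - 1) / s - 1 = (2 * l - 1 - s) / s" using s by (simp add: diff_divide_distrib)
    have eq: "(2 * l - 1 - s) * (s + 1) - l * s = l * (s + 2) - (s + 1) * (s + 2) + (s + 1)"
      by (simp add: algebra_simps)
    have "l * s \<le> (2 * l - 1 - s) * (s + 1)" using h s eq by linarith
    then have A: "l / (s + 1) \<le> (2 * l - 1) / s - 1"
      unfolding e using s by (simp add: divide_le_eq le_divide_eq mult.commute)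
    have "(2 * l - 1) / s = 2 * ((l - 1/2) / s)" using s by (simp add: field_simps)
    then have B: "(2 * l - 1) / s - 1 \<le> 2 * real m + 1" using mge by linarith
    have "real (2 * m + 1) = 2 * real m + 1" by simp
    then show ?thesis using A B by linarith
  qed

lemma grid:
  fixes l s :: real assumes l: "l \<ge> 1" and s: "s \<ge> 1"
  shows "\<exists>S::(real^'d) set. finite S \<and> (\<forall>y\<in>S. scube y (1/2) \<subseteq> cube l)
     \<and> (\<forall>y\<in>S. \<forall>y'\<in>S. y \<noteq> y' \<longrightarrow> (\<exists>i. \<bar>y $ i - y' $ i\<bar> \<ge> s))
     \<and> real (card S) \<ge> (l / (s + 1)) ^ CARD('d)"
proof -
  define m where "m = nat \<lfloor>(l - 1/2) / s\<rfloor>"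
  define T where "T = (\<lambda>j. s * real_of_int j) ` {- int m..int m}"
  define S where "S = {y::real^'d. \<forall>i. y $ i \<in> T}"
  have injT: "inj_on (\<lambda>j. s * real_of_int j) {- int m..int m}" using s by (auto simp: inj_on_def)
  have cardT: "card T = 2 * m + 1" unfolding T_def card_image[OF injT] by simp
  have finT: "finite T" by (simp add: T_def)
  have bij: "bij_betw vec_lambda (Pi\<^sub>E UNIV (\<lambda>_. T)) S"
  proof (rule bij_betwI')
    show "\<And>x y. x \<in> Pi\<^sub>E UNIV (\<lambda>_. T) \<Longrightarrow> y \<in> Pi\<^sub>E UNIV (\<lambda>_. T) \<Longrightarrow> (vec_lambda x = vec_lambda y) = (x = y)"
      by (auto simp: vec_lambda_inject)
    show "\<And>x. x \<in> Pi\<^sub>E UNIV (\<lambda>_. T) \<Longrightarrow> vec_lambda x \<in> S" by (auto simp: S_def)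
    show "\<And>y. y \<in> S \<Longrightarrow> \<exists>x\<in>Pi\<^sub>E UNIV (\<lambda>_. T). y = vec_lambda x"
      by (rule_tac x="vec_nth y" in bexI) (auto simp: S_def)
  qed
  have cardS: "card S = (2 * m + 1) ^ CARD('d)"
    using bij_betw_same_card[OF bij] card_PiE[of "UNIV::'d set" "\<lambda>_. T"] cardT by simp
  have finS: "finite S"
    using bij_betw_finite[OF bij] finite_PiE[of "UNIV::'d set" "\<lambda>_. T"] finT by simp
  have mle: "s * real m \<le> l - 1/2"
  proof -
    have "real m \<le> (l - 1/2) / s" unfolding m_def using l s by simp
    then show ?thesis using s by (simp add: field_simps)
  qed
  have mge: "real m \<ge> (l - 1/2) / s - 1"
    unfolding m_def using l s by (simp add: of_nat_nat)
  have contain: "scube y (1/2) \<subseteq> cube l" if "y \<in> S" for y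
  proof
    fix w assume w: "w \<in> scube y (1/2)"
    show "w \<in> cube l" unfolding cube_def
    proof (intro CollectI allI)
      fix i
      obtain j where j: "j \<in> {- int m..int m}" "y $ i = s * real_of_int j"
        using \<open>y \<in> S\<close> unfolding S_def T_def by blast
      have "\<bar>real_of_int j\<bar> \<le> real m" using j(1) by auto
      then have "\<bar>y $ i\<bar> \<le> s * real m" using j(2) s by (simp add: abs_mult)
      moreover have "\<bar>w $ i - y $ i\<bar> \<le> 1/2" using w by (auto simp: scube_def)
      ultimately show "\<bar>w $ i\<bar> \<le> l" using mle by linarith
    qed
  qed
  have sep: "\<exists>i. \<bar>y $ i - y' $ i\<bar> \<ge> s" if "y \<in> S" "y' \<in> S" "y \<noteq> y'" for y y'
  proof -
    obtain i where i: "y $ i \<noteq> y' $ i" using \<open>y \<noteq> y'\<close> by (auto simp: vec_eq_iff)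
    obtain j where j: "y $ i = s * real_of_int j" using \<open>y \<in> S\<close> unfolding S_def T_def by blast
    obtain j' where j': "y' $ i = s * real_of_int j'" using \<open>y' \<in> S\<close> unfolding S_def T_def by blast
    have "j \<noteq> j'" using i j j' by auto
    then have "\<bar>real_of_int j - real_of_int j'\<bar> \<ge> 1" by linarith
    then have "s * 1 \<le> s * \<bar>real_of_int j - real_of_int j'\<bar>" using s by (intro mult_left_mono) auto
    also have "\<dots> = \<bar>y $ i - y' $ i\<bar>" using j j' s by (simp add: abs_mult right_diff_distrib[symmetric])
    finally show ?thesis by auto
  qed
  have cnt: "l / (s + 1) \<le> real (2 * m + 1)" by (rule grid_count[OF l s mge])
  have "(l / (s + 1)) ^ CARD('d) \<le> real (2 * m + 1) ^ CARD('d)"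
  proof (rule power_mono[OF cnt])
    show "0 \<le> l / (s + 1)" using l s by simp
  qed
  also have "\<dots> = real (card S)" using cardS by simp
  finally have C: "(l / (s + 1)) ^ CARD('d) \<le> real (card S)" .
  show ?thesis
    apply (rule exI[of _ S])
    apply (intro conjI ballI impI)
       apply (rule finS)
      apply (erule contain)
     apply (erule (2) sep)
    apply (rule C)
    done
qed

lemma poly_bound:
  fixes C \<alpha> :: real and d :: nat
  assumes C: "C > 0" and a: "\<alpha> > 0" and d: "d \<ge> 1"
  shows "\<exists>\<kappa>>0. \<forall>l\<ge>1. exp (- C * l ^ d) \<le> \<kappa> * l powr (- \<alpha>)"
proof -
  define n where "n = nat \<lceil>\<alpha>\<rceil> + 1"
  have n0: "n > 0" by (simp add: n_def)
  have an: "\<alpha> \<le> real n" unfolding n_def by linarith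
  define \<kappa> where "\<kappa> = (real n / C) ^ n"
  have k0: "\<kappa> > 0" using C n0 by (simp add: \<kappa>_def)
  have "exp (- C * l ^ d) \<le> \<kappa> * l powr (- \<alpha>)" if l: "l \<ge> 1" for l
  proof -
    have "l powr \<alpha> \<le> l powr real n" using l an by (intro powr_mono) auto
    also have "\<dots> = l ^ n" using l by (simp add: powr_realpow)
    also have "l ^ n = (real n / C) ^ n * (C * l / real n) ^ n"
      using C n0 by (simp add: power_mult_distrib[symmetric])
    also have "(C * l / real n) ^ n \<le> (1 + C * l / real n) ^ n"
      using C l by (intro power_mono) auto
    also have "\<dots> \<le> exp (C * l)"
      by (rule exp_ge_one_plus_x_over_n_power_n) (use C l n0 in \<open>auto intro: order_trans[of _ 0] simp: zero_le_mult_iff\<close>)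
    also have "\<dots> \<le> exp (C * l ^ d)"
    proof -
      have "l \<le> l ^ d" using l d by (metis power_one_right power_increasing)
      then show ?thesis using C by simp
    qed
    finally have "l powr \<alpha> \<le> \<kappa> * exp (C * l ^ d)" unfolding \<kappa>_def
      using C n0 by (simp add: mult_left_mono)
    then have "l powr \<alpha> * exp (- C * l ^ d) \<le> \<kappa>"
      by (simp add: exp_minus field_simps)
    then have "(l powr \<alpha> * exp (- C * l ^ d)) * l powr (- \<alpha>) \<le> \<kappa> * l powr (- \<alpha>)"
      by (rule mult_right_mono) simp
    moreover have "(l powr \<alpha> * exp (- C * l ^ d)) * l powr (- \<alpha>) = exp (- C * l ^ d)"
    proof -
      have one: "l powr \<alpha> * l powr (- \<alpha>) = 1" using l by (simp add: powr_add[symmetric])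
      have "(l powr \<alpha> * exp (- C * l ^ d)) * l powr (- \<alpha>) = exp (- C * l ^ d) * (l powr \<alpha> * l powr (- \<alpha>))"
        by (simp only: mult_ac)
      then show ?thesis using one by simp
    qed
    ultimately show ?thesis by linarith
  qed
  then show ?thesis using k0 by blast
qed

theorem proposition4p7:
  fixes P :: "'w measure"
    and \<theta> :: "real^'d \<Rightarrow> 'w \<Rightarrow> 'w"
    and pp :: "'w \<Rightarrow> (real^'d) set"
    and c :: "'w \<Rightarrow> real^'d \<Rightarrow> real^'d \<Rightarrow> real"
  defines "PP \<equiv> distr P Nsp pp"
  assumes prob: "prob_space P"
    and act_meas: "(\<lambda>(x, \<omega>). \<theta> x \<omega>) \<in> measurable (borel \<Otimes>\<^sub>M P) P"
    and act_0: "\<And>\<omega>. \<theta> 0 \<omega> = \<omega>"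
    and act_add: "\<And>x y \<omega>. \<theta> (x + y) \<omega> = \<theta> x (\<theta> y \<omega>)"
    and pp_meas: "pp \<in> measurable P Nsp"
    and c_meas: "\<And>x y. (\<lambda>\<omega>. c \<omega> x y) \<in> borel_measurable P"
    and c_sym: "\<And>\<omega> x y. c \<omega> x y = c \<omega> y x"
    and c_nonneg: "\<And>\<omega> x y. c \<omega> x y \<ge> 0"
    and c_DT: "\<And>\<omega> x y. \<omega> \<in> space P \<Longrightarrow> \<not> DT_edge (pp \<omega>) x y \<Longrightarrow> c \<omega> x y = 0"
    \<comment> \<open>(A1)\<close>
    and A1_inv: "\<And>x. distr P P (\<theta> x) = P"
    and A1_nonempty: "measure P {\<omega> \<in> space P. pp \<omega> = {}} = 0"
    \<comment> \<open>(A2)\<close>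
    and A2: "0 < (\<integral>\<^sup>+ \<xi>. cnt \<xi> unit_cube \<partial>PP)" "(\<integral>\<^sup>+ \<xi>. cnt \<xi> unit_cube \<partial>PP) < \<infinity>"
    \<comment> \<open>(A3)\<close>
    and A3: "\<exists>W \<in> sets P. measure P W = 1 \<and> (\<forall>x. \<theta> x -` W \<inter> space P = W) \<and>
       (\<forall>\<omega>\<in>W. \<forall>x. pp (\<theta> x \<omega>) = (\<lambda>z. z - x) ` pp \<omega> \<and>
          (\<forall>y z. DT_edge (pp \<omega>) y z \<longrightarrow> c (\<theta> x \<omega>) (y - x) (z - x) = c \<omega> y z))"
    \<comment> \<open>mixing hypothesis\<close>
    and mix: "((\<lambda>k. Linf_norm PP (\<lambda>\<xi>.
                 real_cond_exp PP (Tail k) (indicator {\<xi> \<in> space Nsp. cnt \<xi> (cube (1/2)) = 0}) \<xi>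
                 - measure PP {\<xi> \<in> space Nsp. cnt \<xi> (cube (1/2)) = 0}))
              \<longlongrightarrow> 0) at_top"
  shows "(\<exists>C>0. \<forall>l\<ge>1. measure PP {\<xi> \<in> space Nsp. cnt \<xi> (cube l) = 0}
                          \<le> exp (- C * l ^ CARD('d)))
       \<and> (\<forall>\<alpha>>0. \<exists>\<kappa>>0. \<forall>l\<ge>1. measure PP {\<xi> \<in> space Nsp. cnt \<xi> (cube l) = 0}
                          \<le> \<kappa> * l powr (- \<alpha>))"
proof -
  obtain W where W: "W \<in> sets P" "measure P W = 1"
    "\<forall>\<omega>\<in>W. \<forall>x. pp (\<theta> x \<omega>) = (\<lambda>z. z - x) ` pp \<omega> \<and>
          (\<forall>y z. DT_edge (pp \<omega>) y z \<longrightarrow> c (\<theta> x \<omega>) (y - x) (z - x) = c \<omega> y z)"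
    using A3 by blast
  have stat: "measure PP (shiftN x -` A \<inter> space Nsp) = measure PP A" if "A \<in> sets Nsp" for x A
    unfolding PP_def
    by (rule stationary[OF prob act_meas pp_meas A1_inv W(1,2) _ that]) (use W(3) in \<open>auto simp: shiftN_def\<close>)
  have prPP: "prob_space PP" unfolding PP_def by (rule prob_space.prob_space_distr[OF prob pp_meas])
  have spPP: "space PP = space Nsp" "sets PP = sets Nsp" unfolding PP_def by simp_all
  define E0 :: "(real^'d) set set" where "E0 = {\<xi> \<in> space Nsp. cnt \<xi> (cube (1/2)) = 0}"
  have E0V: "E0 = Vset {0}" by (auto simp: E0_def Vset_def space_Nsp cube_scube cnt_zero_iff)
  have E0s: "E0 \<in> sets Nsp" unfolding E0V by (rule Vset_Nsp) simp
  define p where "p = measure PP E0"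
  have p0: "p \<ge> 0" by (simp add: p_def)
  have p1: "p < 1"
  proof (rule ccontr)
    assume "\<not> p < 1"
    then have "p = 1" using prob_space.prob_le_1[OF prPP, of E0] by (simp add: p_def)
    define h :: "real^'d" where "h = (\<chi> i. 1/2)"
    have "measure PP (Vset {h}) = measure PP (Vset {0})"
      using stat[of "Vset {0}" h] Vset_shift[of h "{0}"] Vset_Nsp[of "{0}"] by simp
    then have m1: "measure PP (Vset {h}) = 1" using \<open>p = 1\<close> by (simp add: p_def E0V)
    have "AE \<xi> in PP. \<xi> \<in> Vset {h}" by (rule prob_space.AE_prob_1[OF prPP m1])
    then have "AE \<xi> in PP. cnt \<xi> unit_cube = 0"
      by eventually_elim (auto simp: Vset_def unit_cube_scube h_def cnt_zero_iff)
    then have "(\<integral>\<^sup>+ \<xi>. cnt \<xi> unit_cube \<partial>PP) = (\<integral>\<^sup>+ \<xi>. 0 \<partial>PP)"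
      by (intro nn_integral_cong_AE) (auto elim!: AE_mp)
    then show False using A2(1) by simp
  qed
  define \<epsilon> where "\<epsilon> = (1 - p) / 2"
  define q where "q = (1 + p) / 2"
  have \<epsilon>0: "\<epsilon> > 0" using p1 by (simp add: \<epsilon>_def)
  have q0: "q > 0" "q < 1" using p0 p1 by (auto simp: q_def)
  have "\<forall>\<^sub>F k in at_top. Linf_norm PP (\<lambda>\<xi>.
                 real_cond_exp PP (Tail k) (indicator E0) \<xi> - p) < ereal \<epsilon>"
    using order_tendstoD(2)[OF mix, of "ereal \<epsilon>"] \<epsilon>0 by (simp add: E0_def p_def)
  then obtain k0 where k0: "\<And>k. k \<ge> k0 \<Longrightarrow> Linf_norm PP (\<lambda>\<xi>.
                 real_cond_exp PP (Tail k) (indicator E0) \<xi> - p) < ereal \<epsilon>"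
    by (auto simp: eventually_at_top_linorder)
  define k where "k = max k0 0"
  have k: "k \<ge> 0" "k \<ge> k0" by (auto simp: k_def)
  define g where "g = real_cond_exp PP (Tail k) (indicator E0)"
  have AEg: "AE \<xi> in PP. g \<xi> \<le> q"
    using esssup_AE[of "\<lambda>\<xi>. ereal \<bar>g \<xi> - p\<bar>" PP]
  proof eventually_elim
    case (elim \<xi>)
    then have "ereal \<bar>g \<xi> - p\<bar> < ereal \<epsilon>"
      using le_less_trans[OF elim k0[OF k(2), unfolded Linf_norm_def g_def[symmetric]]] by blast
    then have "\<bar>g \<xi> - p\<bar> < \<epsilon>" by simp
    then have "g \<xi> - p < \<epsilon>" by (simp only: abs_less_iff)
    then show ?case unfolding \<epsilon>_def q_def by (simp add: field_simps)
  qed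
  have subalg: "subalgebra PP (Tail k)"
  proof -
    have "space (Tail k) = space Nsp" "sets (Tail k) \<subseteq> sets Nsp"
      using subalg_Tail[of k] unfolding subalgebra_def by auto
    then show ?thesis unfolding subalgebra_def spPP by blast
  qed
  interpret fms: finite_measure_subalgebra PP "Tail k"
    by (rule finite_measure_subalgebra.intro[OF prob_space.finite_measure[OF prPP] finite_measure_subalgebra_axioms.intro[OF subalg]])
  have intE0: "integrable PP (indicator E0 :: _ \<Rightarrow> real)"
    by (rule integrable_real_indicator) (use E0s spPP less_top[THEN iffD1, OF fms.emeasure_finite] in auto)
  have cond: "measure PP (Vset {0} \<inter> B) \<le> q * measure PP B" if B: "B \<in> sets (Tail k)" for B
  proof -
    have BPP: "B \<in> sets PP" using subalg B by (auto simp: subalgebra_def)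
    have "measure PP (Vset {0} \<inter> B) = (\<integral>x. indicator B x * indicator E0 x \<partial>PP)"
    proof -
      have "(\<lambda>x. indicator B x * indicator E0 x :: real) = indicator (B \<inter> E0)"
        by (simp add: indicator_inter_arith fun_eq_iff)
      moreover have "B \<inter> E0 \<inter> space PP = Vset {0} \<inter> B"
        using E0s spPP sets.sets_into_space[OF E0s] by (auto simp: E0V)
      ultimately show ?thesis by simp
    qed
    also have "\<dots> = (\<integral>x \<in> B. indicator E0 x \<partial>PP)" by (simp add: set_lebesgue_integral_def)
    also have "\<dots> = (\<integral>x \<in> B. g x \<partial>PP)" unfolding g_def by (rule fms.real_cond_exp_intA[OF intE0 B])
    also have "\<dots> = (\<integral>x. indicator B x * g x \<partial>PP)" by (simp add: set_lebesgue_integral_def)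
    also have "\<dots> \<le> (\<integral>x. indicator B x * q \<partial>PP)"
    proof (rule integral_mono_AE)
      show "integrable PP (\<lambda>x. indicator B x * g x)"
        unfolding g_def by (rule integrable_mult_indicator[OF BPP fms.real_cond_exp_int(1)[OF intE0], simplified])
      show "integrable PP (\<lambda>x. indicator B x * q)"
        using BPP less_top[THEN iffD1, OF fms.emeasure_finite] by auto
      show "AE x in PP. indicator B x * g x \<le> indicator B x * q"
        using AEg by eventually_elim (auto simp: indicator_def)
    qed
    also have "\<dots> = q * measure PP B"
      using BPP sets.sets_into_space by (simp add: Int_absorb2)
    finally show ?thesis .
  qed
  define s where "s = k + 1"
  have s1: "s \<ge> 1" using k by (simp add: s_def)
  define C where "C = - ln q / (s + 1) ^ CARD('d)"
  have C0: "C > 0"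
  proof -
    have a: "- ln q > 0" using q0 by simp
    have b: "(s + 1) ^ CARD('d) > 0" using s1 by simp
    show ?thesis unfolding C_def using divide_pos_pos[OF a b] .
  qed
  have main: "measure PP {\<xi> \<in> space Nsp. cnt \<xi> (cube l) = 0} \<le> exp (- C * l ^ CARD('d))"
    if l: "l \<ge> 1" for l
  proof -
    obtain S :: "(real^'d) set" where S0: "finite S \<and> (\<forall>y\<in>S. scube y (1/2) \<subseteq> cube l)
      \<and> (\<forall>y\<in>S. \<forall>y'\<in>S. y \<noteq> y' \<longrightarrow> (\<exists>i. \<bar>y $ i - y' $ i\<bar> \<ge> s))
      \<and> real (card S) \<ge> (l / (s + 1)) ^ CARD('d)"
      using grid[OF l s1] by (rule exE)
    note S = conjunct1[OF S0] conjunct1[OF conjunct2[OF S0]] conjunct1[OF conjunct2[OF conjunct2[OF S0]]]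
      conjunct2[OF conjunct2[OF conjunct2[OF S0]]]
    have sep: "\<forall>y\<in>S. \<forall>y'\<in>S. y \<noteq> y' \<longrightarrow> (\<exists>i. \<bar>y $ i - y' $ i\<bar> > k + 1/2)"
    proof (intro ballI impI)
      fix y y' assume yy: "y \<in> S" "y' \<in> S" "y \<noteq> y'"
      then obtain i where i: "\<bar>y $ i - y' $ i\<bar> \<ge> s" using S(3) by blast
      have "\<bar>y $ i - y' $ i\<bar> > k + 1/2" using i unfolding s_def by linarith
      then show "\<exists>i. \<bar>y $ i - y' $ i\<bar> > k + 1/2" by blast
    qed
    have "{\<xi> \<in> space Nsp. cnt \<xi> (cube l) = 0} \<subseteq> Vset S"
      using S(2) by (auto simp: Vset_def space_Nsp cnt_zero_iff)
    then have "measure PP {\<xi> \<in> space Nsp. cnt \<xi> (cube l) = 0} \<le> measure PP (Vset S)"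
      by (rule finite_measure.finite_measure_mono[OF prob_space.finite_measure[OF prPP]])
        (simp add: spPP Vset_Nsp[OF S(1)])
    also have "\<dots> \<le> q ^ card S"
      by (rule prod_bound[OF stat cond _ k(1) prPP S(1) sep]) (use q0 in simp_all)
    also have "q ^ card S = exp (real (card S) * ln q)"
      using q0 by (simp add: exp_of_nat_mult)
    also have "\<dots> \<le> exp ((l / (s + 1)) ^ CARD('d) * ln q)"
      using S(4) q0 by (intro exp_mono mult_right_mono_neg) auto
    also have "(l / (s + 1)) ^ CARD('d) * ln q = - C * l ^ CARD('d)"
    proof -
      have X: "(s + 1) ^ CARD('d) > 0" using s1 by simp
      show ?thesis unfolding C_def power_divide using X by (simp add: field_simps)
    qed
    finally show ?thesis .
  qed
  show ?thesis
  proof (intro conjI allI impI)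
    show "\<exists>C>0. \<forall>l\<ge>1. measure PP {\<xi> \<in> space Nsp. cnt \<xi> (cube l) = 0} \<le> exp (- C * l ^ CARD('d))"
      using C0 main by blast
  next
    fix \<alpha> :: real assume a: "\<alpha> > 0"
    obtain \<kappa> where \<kappa>: "\<kappa> > 0" "\<And>l. l \<ge> 1 \<Longrightarrow> exp (- C * l ^ CARD('d)) \<le> \<kappa> * l powr (- \<alpha>)"
      using poly_bound[OF C0 a, of "CARD('d)"] by auto
    show "\<exists>\<kappa>>0. \<forall>l\<ge>1. measure PP {\<xi> \<in> space Nsp. cnt \<xi> (cube l) = 0} \<le> \<kappa> * l powr (- \<alpha>)"
      using \<kappa> main order_trans by blast
  qed
qed

end
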